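(* Let $n\ge 3$ and $d=\lfloor n/2\rfloor$. Let $x\in Gr^{>0}(2,n)$ be a minimizer of $E$ on $Gr^{>0}(2,n)$, and let $X$ be a spanning matrix of $x$ with all $\Delta_{i,j}(X)>0$ ($i<j$), scaled so that $D_1=\sin(\pi/n)$. Then: (1) $D_k=s_k$ for all $k\in\{1,\dots,n-1\}$; (2) $s_1\le \Delta_{i,j}(X)\le s_d$ for all $1\le i<j\le n$; (3) $\Delta_{i,j}(X)=s_1$ for all $(i,j)\in O_1$ and $\Delta_{i,j}(X)=s_d$ for all $(i,j)\in O_d$.
   Context: For a real $2\times n$ matrix $X$ and $1\le i<j\le n$, $\Delta_{i,j}(X)$ is the determinant of the $2\times2$ submatrix of columns $i,j$. $Gr^{>0}(2,n)$ is the set of 2-dimensional subspaces of $\mathbb{R}^n$ having a spanning $2\times n$ matrix $X$ (rows spanning the subspace) with $\Delta_{i,j}(X)>0$ for all $i<j$; $E(x)=\max_{i<j}\Delta_{i,j}(X)/\min_{i<j}\Delta_{i,j}(X)$. Set $s_k=\sin(k\pi/n)$. Let $\sigma$ act on strictly increasing pairs $(i,j)$, $1\le i<j\le n$, by $\sigma(i,j)=(i+1,j+1)$ if $j<n$ and $\sigma(i,n)=(1,i+1)$. For $k\in\{1,\dots,n-1\}$ the $k$-th orbit is the multiset $O_k=\{\sigma^m(1,k+1): m=0,\dots,n-1\}$, and $D_k=\left(\prod_{m=0}^{n-1}\Delta_{\sigma^m(1,k+1)}(X)\right)^{1/n}$ is the geometric mean of the coordinates over $O_k$. *)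

theory Defs
  imports Complex_Main
begin

text \<open>A real 2 x n matrix is represented as a function X :: nat => nat => real,
  with row indices 1,2 and column indices 1..n (other entries are irrelevant).\<close>

definition minor :: "(nat \<Rightarrow> nat \<Rightarrow> real) \<Rightarrow> nat \<Rightarrow> nat \<Rightarrow> real" where
  "minor X i j = X 1 i * X 2 j - X 1 j * X 2 i"

definition pairs :: "nat \<Rightarrow> (nat \<times> nat) set" where
  "pairs n = {(i, j). 1 \<le> i \<and> i < j \<and> j \<le> n}"

definition tot_pos :: "nat \<Rightarrow> (nat \<Rightarrow> nat \<Rightarrow> real) \<Rightarrow> bool" where
  "tot_pos n X \<longleftrightarrow> (\<forall>(i, j) \<in> pairs n. minor X i j > 0)"

definition Eratio :: "nat \<Rightarrow> (nat \<Rightarrow> nat \<Rightarrow> real) \<Rightarrow> real" where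
  "Eratio n X = Max ((\<lambda>(i, j). minor X i j) ` pairs n) / Min ((\<lambda>(i, j). minor X i j) ` pairs n)"

definition sigma :: "nat \<Rightarrow> nat \<times> nat \<Rightarrow> nat \<times> nat" where
  "sigma n p = (if snd p < n then (fst p + 1, snd p + 1) else (1, fst p + 1))"

definition Dk :: "nat \<Rightarrow> (nat \<Rightarrow> nat \<Rightarrow> real) \<Rightarrow> nat \<Rightarrow> real" where
  "Dk n X k = root n (\<Prod>m<n. case_prod (minor X) ((sigma n ^^ m) (1, k + 1)))"

definition sk :: "nat \<Rightarrow> nat \<Rightarrow> real" where
  "sk n k = sin (real k * pi / real n)"

end

theory Submission
  imports Defs "HOL-Analysis.Convex"
begin


definition wa :: "(nat \<Rightarrow> nat \<Rightarrow> real) \<Rightarrow> nat \<Rightarrow> nat \<Rightarrow> real" where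
  "wa X n j = (-1) ^ (j div n) * X 1 (j mod n + 1)"
definition wb :: "(nat \<Rightarrow> nat \<Rightarrow> real) \<Rightarrow> nat \<Rightarrow> nat \<Rightarrow> real" where
  "wb X n j = (-1) ^ (j div n) * X 2 (j mod n + 1)"
definition PP :: "(nat \<Rightarrow> nat \<Rightarrow> real) \<Rightarrow> nat \<Rightarrow> nat \<Rightarrow> nat \<Rightarrow> real" where
  "PP X n a b = wa X n a * wb X n b - wa X n b * wb X n a"
definition QQ :: "(nat \<Rightarrow> nat \<Rightarrow> real) \<Rightarrow> nat \<Rightarrow> nat \<Rightarrow> real" where
  "QQ X n k = (\<Prod>m<n. PP X n m (m + k))"

lemma divmod_aux:
  fixes x y n :: nat
  assumes "x < n"
  shows "(x + n * y) div n = y" "(x + n * y) mod n = x"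
  using assms by simp_all

lemma PP_minor: "PP X n a b = (-1) ^ (a div n) * (-1) ^ (b div n) * minor X (a mod n + 1) (b mod n + 1)"
  by (simp add: PP_def wa_def wb_def minor_def algebra_simps)

lemma minor_anti: "minor X i j = - minor X j i"
  by (simp add: minor_def)

lemma PP_anti: "PP X n a b = - PP X n b a"
  by (simp add: PP_def)

lemma PP_shift2: "0 < n \<Longrightarrow> PP X n a (b + n) = - PP X n a b"
  by (simp add: PP_minor)

lemma PP_shift1: "0 < n \<Longrightarrow> PP X n (a + n) b = - PP X n a b"
  by (simp add: PP_minor)

lemma PP_shift: "0 < n \<Longrightarrow> PP X n (a + n) (b + n) = PP X n a b"
  by (simp add: PP_shift1 PP_shift2)

lemma pluecker_aux:
  fixes a1 a2 b1 b2 c1 c2 d1 d2 :: real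
  shows "(a1*c2 - c1*a2)*(b1*d2-d1*b2) = (a1*b2-b1*a2)*(c1*d2-d1*c2) + (a1*d2-d1*a2)*(b1*c2-c1*b2)"
  by (simp add: algebra_simps)

lemma PP_pluecker:
  "PP X n a c * PP X n b d = PP X n a b * PP X n c d + PP X n a d * PP X n b c"
  unfolding PP_def by (rule pluecker_aux)

lemma PP_pos:
  assumes tp: "tot_pos n X" and ab: "a < b" and ba: "b < a + n"
  shows "PP X n a b > 0"
proof -
  have n0: "0 < n" using ab ba by simp
  define q where "q = a div n"
  define r where "r = a mod n"
  define t where "t = b - a"
  have a_eq: "a = r + n * q" unfolding q_def r_def by simp
  have b_eq: "b = (r + t) + n * q" using ab a_eq t_def by simp
  have rn: "r < n" unfolding r_def using n0 by simp
  have t0: "0 < t" "t < n" using ab ba t_def by auto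
  show ?thesis
  proof (cases "r + t < n")
    case True
    have "b div n = q" "b mod n = r + t" using True b_eq n0 by simp_all
    moreover have "a div n = q" "a mod n = r" using q_def r_def by simp_all
    moreover have "minor X (r + 1) (r + t + 1) > 0"
      using tp True t0 unfolding tot_pos_def pairs_def by auto
    ultimately show ?thesis by (simp add: PP_minor)
  next
    case False
    have b_eq2: "b = (r + t - n) + n * (q + 1)" using False b_eq by simp
    have lt: "r + t - n < n" using rn t0 by simp
    have "b div n = q + 1" "b mod n = r + t - n"
      using divmod_aux[OF lt, of "q+1"] b_eq2 by simp_all
    moreover have "a div n = q" "a mod n = r" using q_def r_def by simp_all
    moreover have "minor X (r + t - n + 1) (r + 1) > 0"
      using tp False t0 rn unfolding tot_pos_def pairs_def by auto
    ultimately show ?thesis by (simp add: PP_minor minor_anti[of X "Suc r" "Suc (r + t - n)"])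
  qed
qed

lemma sigma_pow:
  assumes "1 \<le> k" "k < n" "m < n"
  shows "(sigma n ^^ m) (1, k + 1) = (if m + k < n then (m + 1, m + k + 1) else (m + k + 1 - n, m + 1))"
  using assms(3)
proof (induction m)
  case 0
  then show ?case using assms by simp
next
  case (Suc m)
  then have IH: "(sigma n ^^ m) (1, k + 1) = (if m + k < n then (m + 1, m + k + 1) else (m + k + 1 - n, m + 1))"
    by simp
  have "(sigma n ^^ Suc m) (1, k + 1) = sigma n ((sigma n ^^ m) (1, k + 1))" by simp
  also have "\<dots> = sigma n (if m + k < n then (m + 1, m + k + 1) else (m + k + 1 - n, m + 1))"
    by (simp only: IH)
  also have "\<dots> = (if Suc m + k < n then (Suc m + 1, Suc m + k + 1) else (Suc m + k + 1 - n, Suc m + 1))"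
    using Suc.prems assms by (auto simp add: sigma_def)
  finally show ?case .
qed

lemma sigma_pow_pairs:
  assumes "1 \<le> k" "k < n" "m < n"
  shows "(sigma n ^^ m) (1, k + 1) \<in> pairs n"
  unfolding sigma_pow[OF assms] using assms by (auto simp add: pairs_def)

lemma orbit_PP:
  assumes "1 \<le> k" "k < n" "m < n"
  shows "case_prod (minor X) ((sigma n ^^ m) (1, k + 1)) = PP X n m (m + k)"
proof (cases "m + k < n")
  case True
  then show ?thesis unfolding sigma_pow[OF assms] using assms by (simp add: PP_minor)
next
  case False
  have e: "m + k = (m + k - n) + n * 1" using False by simp
  have lt: "m + k - n < n" using assms by simp
  have "(m + k) div n = 1" "(m + k) mod n = m + k - n"
    using divmod_aux[OF lt, of 1] e by simp_all
  moreover have "m + k + 1 - n = m + k - n + 1" using False by simp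
  ultimately show ?thesis unfolding sigma_pow[OF assms] using assms False
    by (simp add: PP_minor minor_anti[of X "Suc (m + k - n)" "Suc m"])
qed

lemma Dk_QQ:
  assumes "1 \<le> k" "k < n"
  shows "Dk n X k = root n (QQ X n k)"
  unfolding Dk_def QQ_def using orbit_PP[OF assms] by simp

lemma prod_shift_periodic:
  fixes g :: "nat \<Rightarrow> real"
  assumes per: "\<And>i. g (i + n) = g i"
  shows "(\<Prod>m<n. g (m + j)) = (\<Prod>m<n. g m)"
proof (induction j)
  case 0 then show ?case by simp
next
  case (Suc j)
  define h where "h m = g (m + j)" for m
  have hp: "h n = h 0" unfolding h_def using per[of j] by (simp add: add.commute)
  have "(\<Prod>m<n. h (Suc m)) = (\<Prod>m<n. h m)"
  proof (cases n)
    case 0 then show ?thesis by simp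
  next
    case (Suc n')
    have "(\<Prod>m<n. h (Suc m)) = (\<Prod>m<n'. h (Suc m)) * h n" using Suc by simp
    also have "\<dots> = h 0 * (\<Prod>m<n'. h (Suc m))" using hp by simp
    also have "\<dots> = (\<Prod>m<Suc n'. h m)" by (rule prod.lessThan_Suc_shift[symmetric])
    also have "\<dots> = (\<Prod>m<n. h m)" using Suc by simp
    finally show ?thesis .
  qed
  then show ?case using Suc.IH unfolding h_def by simp
qed

lemma QQ_pos:
  assumes "tot_pos n X" "1 \<le> k" "k < n"
  shows "QQ X n k > 0"
  unfolding QQ_def using assms by (intro prod_pos) (auto intro: PP_pos)

lemma QQ_sym:
  assumes "1 \<le> k" "k < n"
  shows "QQ X n (n - k) = QQ X n k"
proof -
  have n0: "0 < n" using assms by simp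
  define g where "g j = PP X n j (j + k)" for j
  have per: "g (i + n) = g i" for i
    unfolding g_def using PP_shift[OF n0, of X i "i + k"] by (simp add: algebra_simps)
  have "PP X n m (m + (n - k)) = g (m + (n - k))" for m
  proof -
    have "g (m + (n - k)) = PP X n (m + (n - k)) (m + n)"
      unfolding g_def using assms by (simp add: algebra_simps)
    also have "\<dots> = - PP X n (m + (n - k)) m" using PP_shift2[OF n0] by simp
    also have "\<dots> = PP X n m (m + (n - k))" using PP_anti[of X n m "m + (n - k)"] by simp
    finally show ?thesis by simp
  qed
  then have "QQ X n (n - k) = (\<Prod>m<n. g (m + (n - k)))" unfolding QQ_def by simp
  also have "\<dots> = (\<Prod>m<n. g m)" using per by (rule prod_shift_periodic)
  also have "\<dots> = QQ X n k" unfolding QQ_def g_def by simp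
  finally show ?thesis .
qed



lemma sin_sq_diff: "sin ((a::real) - b) * sin (a + b) = sin a ^ 2 - sin b ^ 2"
proof -
  have sq: "(p - q) * (p + q) = p ^ 2 - q ^ 2" for p q :: real
    by (simp add: power2_eq_square algebra_simps)
  have "sin (a - b) * sin (a + b) = (sin a * cos b - cos a * sin b) * (sin a * cos b + cos a * sin b)"
    by (simp only: sin_diff sin_add)
  also have "\<dots> = (sin a * cos b) ^ 2 - (cos a * sin b) ^ 2" by (rule sq)
  also have "\<dots> = sin a ^ 2 * cos b ^ 2 - cos a ^ 2 * sin b ^ 2" by (simp only: power_mult_distrib)
  also have "\<dots> = sin a ^ 2 - sin b ^ 2"
    by (simp add: cos_squared_eq algebra_simps)
  finally show ?thesis .
qed

lemma sk_rec:
  assumes "1 \<le> k"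
  shows "sk n k ^ 2 = sk n 1 ^ 2 + sk n (k - 1) * sk n (k + 1)"
proof -
  define a where "a = real k * pi / real n"
  define b where "b = pi / real n"
  have "sk n (k - 1) = sin (a - b)"
    unfolding sk_def a_def b_def using assms by (simp add: of_nat_diff diff_divide_distrib left_diff_distrib)
  moreover have "real (k + 1) * pi / real n = a + b"
    unfolding a_def b_def by (simp add: add_divide_distrib distrib_right)
  then have "sk n (k + 1) = sin (a + b)" unfolding sk_def by (simp only:)
  moreover have "sk n k = sin a" "sk n 1 = sin b" unfolding sk_def a_def b_def by simp_all
  ultimately show ?thesis using sin_sq_diff[of a b] by simp
qed

lemma sk_pos:
  assumes "1 \<le> k" "k < n"
  shows "sk n k > 0"
proof -
  have n0: "real n > 0" using assms by simp
  have "real k * pi / real n < pi"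
    using assms n0 by (simp add: divide_less_eq)
  moreover have "0 < real k * pi / real n" using assms n0 by simp
  ultimately show ?thesis unfolding sk_def by (rule sin_gt_zero[rotated])
qed

lemma sk_sym:
  assumes "k \<le> n" "0 < n"
  shows "sk n (n - k) = sk n k"
proof -
  have "real (n - k) * pi / real n = pi - real k * pi / real n"
    using assms by (simp add: of_nat_diff field_simps)
  then show ?thesis unfolding sk_def by simp
qed

lemma sk_mono:
  assumes "a \<le> b" "2 * b \<le> n" "0 < n"
  shows "sk n a \<le> sk n b"
  unfolding sk_def
proof (rule sin_monotone_2pi_le)
  have n0: "real n > 0" using assms by simp
  show "- (pi / 2) \<le> real a * pi / real n" using n0 by (simp add: order_trans[OF _ zero_le_divide_iff[THEN iffD2]])
  show "real a * pi / real n \<le> real b * pi / real n"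
    using assms n0 by (simp add: divide_right_mono)
  have "real (2 * b) \<le> real n" using assms by linarith
  then have "2 * real b * pi \<le> real n * pi" by simp
  then show "real b * pi / real n \<le> pi / 2" using n0 by (simp add: field_simps)
qed

lemma sk_bounds:
  assumes "1 \<le> t" "t < n"
  shows "sk n 1 \<le> sk n t \<and> sk n t \<le> sk n (n div 2)"
proof -
  define t' where "t' = min t (n - t)"
  have eq: "sk n t = sk n t'"
    unfolding t'_def using sk_sym[of t n] assms by (auto simp: min_def)
  have "1 \<le> t'" "t' \<le> n div 2" unfolding t'_def using assms by auto
  moreover have "2 * (n div 2) \<le> n" by simp
  ultimately show ?thesis unfolding eq using assms
    by (auto intro!: sk_mono)
qed

definition Yreg :: "nat \<Rightarrow> nat \<Rightarrow> nat \<Rightarrow> real" where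
  "Yreg n i j = (if i = 1 then cos (real j * pi / real n) else sin (real j * pi / real n))"

lemma minor_Yreg:
  assumes "i < j"
  shows "minor (Yreg n) i j = sk n (j - i)"
proof -
  have "minor (Yreg n) i j = sin (real j * pi / real n - real i * pi / real n)"
    unfolding minor_def Yreg_def by (simp add: sin_diff algebra_simps)
  also have "real j * pi / real n - real i * pi / real n = real (j - i) * pi / real n"
    using assms by (simp add: of_nat_diff diff_divide_distrib left_diff_distrib)
  finally show ?thesis unfolding sk_def .
qed

lemma Yreg_pos: "tot_pos n (Yreg n)"
  unfolding tot_pos_def pairs_def using minor_Yreg sk_pos by auto

lemma pairs_finite: "finite (pairs n)"
proof -
  have "pairs n \<subseteq> {..n} \<times> {..n}" unfolding pairs_def by auto
  then show ?thesis by (rule finite_subset) simp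
qed

lemma pairs_12: "2 \<le> n \<Longrightarrow> (1, 2) \<in> pairs n"
  unfolding pairs_def by simp

lemma Eratio_Yreg:
  assumes "3 \<le> n"
  shows "Eratio n (Yreg n) = sk n (n div 2) / sk n 1"
proof -
  let ?V = "(\<lambda>(i, j). minor (Yreg n) i j) ` pairs n"
  have fin: "finite ?V" using pairs_finite by simp
  have bnd: "v \<in> ?V \<Longrightarrow> sk n 1 \<le> v \<and> v \<le> sk n (n div 2)" for v
    unfolding pairs_def using minor_Yreg sk_bounds by auto
  have in1: "sk n 1 \<in> ?V"
  proof -
    have "(1, 2) \<in> pairs n" using assms pairs_12 by simp
    moreover have "minor (Yreg n) 1 2 = sk n 1" using minor_Yreg[of 1 2 n] by simp
    ultimately show ?thesis by force
  qed
  have ind: "sk n (n div 2) \<in> ?V"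
  proof -
    have "(1, n div 2 + 1) \<in> pairs n" using assms unfolding pairs_def by auto
    moreover have "minor (Yreg n) 1 (n div 2 + 1) = sk n (n div 2)"
      using minor_Yreg[of 1 "n div 2 + 1" n] assms by simp
    ultimately show ?thesis by force
  qed
  have "Max ?V = sk n (n div 2)" using fin ind bnd by (intro Max_eqI) auto
  moreover have "Min ?V = sk n 1" using fin in1 bnd by (intro Min_eqI) auto
  ultimately show ?thesis unfolding Eratio_def by simp
qed



lemma gm_super:
  fixes x y :: "nat \<Rightarrow> real"
  assumes n0: "0 < n" and xp: "\<And>i. i < n \<Longrightarrow> x i > 0" and yp: "\<And>i. i < n \<Longrightarrow> y i > 0"
  shows "root n (\<Prod>i<n. x i) + root n (\<Prod>i<n. y i) \<le> root n (\<Prod>i<n. x i + y i)"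
proof -
  define C where "C = (\<Prod>i<n. x i + y i)"
  have Cp: "C > 0" unfolding C_def using xp yp by (intro prod_pos) (simp add: add_pos_pos)
  define a where "a i = x i / (x i + y i)" for i
  define b where "b i = y i / (x i + y i)" for i
  have ap: "a i \<ge> 0" "b i \<ge> 0" if "i < n" for i
    unfolding a_def b_def using xp[OF that] yp[OF that] by simp_all
  have ab1: "a i + b i = 1" if "i < n" for i
    unfolding a_def b_def using xp[OF that] yp[OF that] by (simp add: add_divide_distrib[symmetric])
  have pa: "(\<Prod>i<n. a i) = (\<Prod>i<n. x i) / C" unfolding a_def C_def by (simp add: prod_dividef)
  have pb: "(\<Prod>i<n. b i) = (\<Prod>i<n. y i) / C" unfolding b_def C_def by (simp add: prod_dividef)
  have amgm: "root n (\<Prod>i<n. f i) \<le> (\<Sum>i<n. f i / n)" if "\<And>i. i < n \<Longrightarrow> f i \<ge> 0" for f :: "nat \<Rightarrow> real"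
  proof -
    have "(\<Prod>i<n. f i) \<ge> 0" using that by (intro prod_nonneg) simp
    then have "root n (\<Prod>i<n. f i) = (\<Prod>i<n. f i) powr (1 / card {..<n})"
      using n0 by (simp add: root_powr_inverse)
    also have "\<dots> \<le> (\<Sum>i<n. f i / card {..<n})"
      using n0 that by (intro arith_geom_mean) auto
    finally show ?thesis by simp
  qed
  have "root n (\<Prod>i<n. a i) + root n (\<Prod>i<n. b i) \<le> (\<Sum>i<n. a i / n) + (\<Sum>i<n. b i / n)"
    using amgm[of a] amgm[of b] ap by (intro add_mono) auto
  also have "\<dots> = (\<Sum>i<n. (a i + b i) / n)" by (simp add: sum.distrib add_divide_distrib)
  also have "\<dots> = (\<Sum>i<n. 1 / real n)" using ab1 by simp
  also have "\<dots> = 1" using n0 by simp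
  finally have "root n (\<Prod>i<n. x i) / root n C + root n (\<Prod>i<n. y i) / root n C \<le> 1"
    unfolding pa pb real_root_divide .
  moreover have "root n C > 0" using Cp n0 by simp
  ultimately have "root n (\<Prod>i<n. x i) + root n (\<Prod>i<n. y i) \<le> root n C"
    by (simp add: add_divide_distrib[symmetric] divide_le_eq)
  then show ?thesis unfolding C_def .
qed

lemma QQ_shift:
  assumes "0 < n"
  shows "(\<Prod>m<n. PP X n (m + j) (m + j + k)) = QQ X n k"
proof -
  define g where "g i = PP X n i (i + k)" for i
  have per: "g (i + n) = g i" for i
    unfolding g_def using PP_shift[OF assms, of X i "i + k"] by (simp add: algebra_simps)
  have "(\<Prod>m<n. PP X n (m + j) (m + j + k)) = (\<Prod>m<n. g (m + j))" unfolding g_def by simp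
  also have "\<dots> = (\<Prod>m<n. g m)" using per by (rule prod_shift_periodic)
  finally show ?thesis unfolding QQ_def g_def .
qed

lemma D_ineq:
  assumes tp: "tot_pos n X" and k2: "2 \<le> k" and kn: "k + 2 \<le> n"
  shows "root n (QQ X n 1) ^ 2 + root n (QQ X n (k - 1)) * root n (QQ X n (k + 1)) \<le> root n (QQ X n k) ^ 2"
proof -
  have n0: "0 < n" using kn by simp
  define x where "x i = PP X n (i + 0) (i + 0 + 1) * PP X n (i + k) (i + k + 1)" for i
  define y where "y i = PP X n (i + 0) (i + 0 + (k + 1)) * PP X n (i + 1) (i + 1 + (k - 1))" for i
  have pl: "PP X n (i + 0) (i + 0 + k) * PP X n (i + 1) (i + 1 + k) = x i + y i" for i
  proof -
    have e1: "i + 1 + (k - 1) = i + k" "i + 0 + (k + 1) = i + k + 1" "i + 1 + k = i + k + 1" "i + 0 = i"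
      using k2 by simp_all
    show ?thesis unfolding x_def y_def e1
      using PP_pluecker[of X n i "i + k" "i + 1" "i + k + 1"] by simp
  qed
  have xp: "x i > 0" if "i < n" for i
    unfolding x_def using n0 kn by (intro mult_pos_pos PP_pos[OF tp]) simp_all
  have yp: "y i > 0" if "i < n" for i
    unfolding y_def using n0 kn k2 by (intro mult_pos_pos PP_pos[OF tp]) simp_all
  have Px: "(\<Prod>i<n. x i) = QQ X n 1 * QQ X n 1"
    unfolding x_def prod.distrib QQ_shift[OF n0] ..
  have Py: "(\<Prod>i<n. y i) = QQ X n (k + 1) * QQ X n (k - 1)"
    unfolding y_def prod.distrib QQ_shift[OF n0] ..
  have Pl: "(\<Prod>i<n. x i + y i) = QQ X n k * QQ X n k"
    unfolding pl[symmetric] prod.distrib QQ_shift[OF n0] ..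
  have "root n (\<Prod>i<n. x i) + root n (\<Prod>i<n. y i) \<le> root n (\<Prod>i<n. x i + y i)"
    using gm_super[OF n0, of x y] xp yp by simp
  then show ?thesis unfolding Px Py Pl real_root_mult power2_eq_square by (simp add: mult.commute)
qed



lemma prod_eq_lower:
  fixes f :: "nat \<Rightarrow> real"
  assumes lb: "\<And>i. i < n \<Longrightarrow> c \<le> f i" and c0: "0 < c"
    and pr: "(\<Prod>i<n. f i) = c ^ n" and m: "m < n"
  shows "f m = c"
proof -
  have fin: "finite {..<n}" by simp
  have mem: "m \<in> {..<n}" using m by simp
  have cardr: "card ({..<n} - {m}) = n - 1" using mem by simp
  have r: "c ^ (n - 1) \<le> (\<Prod>i\<in>{..<n} - {m}. f i)"
  proof -
    have "(\<Prod>i\<in>{..<n} - {m}. c) \<le> (\<Prod>i\<in>{..<n} - {m}. f i)"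
      using lb c0 by (intro prod_mono) auto
    then show ?thesis using cardr by simp
  qed
  have "c ^ n = f m * (\<Prod>i\<in>{..<n} - {m}. f i)" using pr prod.remove[OF fin mem, of f] by simp
  also have "\<dots> \<ge> f m * c ^ (n - 1)" using r lb[OF m] c0 by (intro mult_left_mono) auto
  finally have "f m * c ^ (n - 1) \<le> c * c ^ (n - 1)"
    using m by (metis power_eq_if less_nat_zero_code)
  then have "f m \<le> c" using c0 by (simp add: mult_le_cancel_right_pos)
  then show ?thesis using lb[OF m] by simp
qed

lemma prod_eq_upper:
  fixes f :: "nat \<Rightarrow> real"
  assumes ub: "\<And>i. i < n \<Longrightarrow> f i \<le> c" and fp: "\<And>i. i < n \<Longrightarrow> 0 < f i"
    and pr: "(\<Prod>i<n. f i) = c ^ n" and m: "m < n"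
  shows "f m = c"
proof -
  have fin: "finite {..<n}" by simp
  have mem: "m \<in> {..<n}" using m by simp
  have c0: "0 < c" using ub[OF m] fp[OF m] by simp
  have cardr: "card ({..<n} - {m}) = n - 1" using mem by simp
  have r: "(\<Prod>i\<in>{..<n} - {m}. f i) \<le> c ^ (n - 1)"
  proof -
    have "(\<Prod>i\<in>{..<n} - {m}. f i) \<le> (\<Prod>i\<in>{..<n} - {m}. c)"
      using ub fp by (intro prod_mono) (auto intro: less_imp_le)
    then show ?thesis using cardr by simp
  qed
  have "c ^ n = f m * (\<Prod>i\<in>{..<n} - {m}. f i)" using pr prod.remove[OF fin mem, of f] by simp
  also have "\<dots> \<le> f m * c ^ (n - 1)" using r fp[OF m] by (intro mult_left_mono) auto
  finally have "c * c ^ (n - 1) \<le> f m * c ^ (n - 1)"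
    using m by (metis power_eq_if less_nat_zero_code)
  then have "c \<le> f m" using c0 by (simp add: mult_le_cancel_right_pos)
  then show ?thesis using ub[OF m] by simp
qed



theorem mainTheorem2:
  fixes n :: nat and X :: "nat \<Rightarrow> nat \<Rightarrow> real"
  assumes n3: "n \<ge> 3"
    and pos: "tot_pos n X"
    and minimizer: "\<forall>Y. tot_pos n Y \<longrightarrow> Eratio n X \<le> Eratio n Y"
    and scale: "Dk n X 1 = sin (pi / real n)"
  shows "(\<forall>k \<in> {1..n-1}. Dk n X k = sk n k)
    \<and> (\<forall>i j. 1 \<le> i \<and> i < j \<and> j \<le> n \<longrightarrow>
          sk n 1 \<le> minor X i j \<and> minor X i j \<le> sk n (n div 2))
    \<and> (\<forall>m < n. case_prod (minor X) ((sigma n ^^ m) (1, 2)) = sk n 1)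
    \<and> (\<forall>m < n. case_prod (minor X) ((sigma n ^^ m) (1, n div 2 + 1)) = sk n (n div 2))"
proof -
  have n0: "0 < n" using n3 by simp
  define d where "d = n div 2"
  have d1: "1 \<le> d" "d < n" "2 * d \<le> n" "n \<le> 2 * d + 1" using n3 unfolding d_def by auto
  define D where "D k = root n (QQ X n k)" for k
  have Dk_D: "Dk n X k = D k" if "1 \<le> k" "k < n" for k
    using Dk_QQ[OF that] unfolding D_def by simp
  have Qpos: "QQ X n k > 0" if "1 \<le> k" "k < n" for k using QQ_pos[OF pos that] .
  have Dpos: "D k > 0" if "1 \<le> k" "k < n" for k
    unfolding D_def using Qpos[OF that] n0 by simp
  have Dsym: "D (n - k) = D k" if "1 \<le> k" "k < n" for k
    unfolding D_def using QQ_sym[OF that] by simp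
  have Dineq: "D 1 ^ 2 + D (k - 1) * D (k + 1) \<le> D k ^ 2" if "2 \<le> k" "k + 2 \<le> n" for k
    unfolding D_def using D_ineq[OF pos that] .
  have QD: "QQ X n k = D k ^ n" if "1 \<le> k" "k < n" for k
    unfolding D_def using Qpos[OF that] n0 by simp
  have spos: "sk n k > 0" if "1 \<le> k" "k < n" for k using sk_pos[OF that] .
  have s1: "sk n 1 > 0" using spos n3 by simp
  have D1: "D 1 = sk n 1" using scale Dk_D[of 1] n3 by (simp add: sk_def)
  have Dn1: "D (n - 1) = sk n (n - 1)" using Dsym[of 1] D1 sk_sym[of 1 n] n3 by simp
  have lower: "sk n k \<le> D k" if "1 \<le> k" "k < n" for k
  proof -
    define f where "f j = D j / sk n j" for j
    define S where "S = {1..n-1}"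
    have finS: "finite S" unfolding S_def by simp
    have neS: "S \<noteq> {}" unfolding S_def using n3 by auto
    define \<mu> where "\<mu> = Min (f ` S)"
    have "\<mu> \<in> f ` S" unfolding \<mu>_def using finS neS by simp
    then obtain k0 where k0S: "k0 \<in> S" and fk0: "f k0 = \<mu>" by auto
    have \<mu>le: "\<mu> \<le> f j" if "j \<in> S" for j unfolding \<mu>_def using finS that by simp
    have k0r: "1 \<le> k0" "k0 < n" using k0S n3 unfolding S_def by auto
    have \<mu>pos: "\<mu> > 0" unfolding fk0[symmetric] f_def using Dpos[OF k0r] spos[OF k0r] by simp
    have "1 \<le> \<mu>"
    proof (rule ccontr)
      assume "\<not> 1 \<le> \<mu>"
      then have \<mu>1: "\<mu> < 1" by simp
      have "f 1 = 1" unfolding f_def using D1 s1 by simp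
      then have "k0 \<noteq> 1" using fk0 \<mu>1 by auto
      moreover have "sk n (n - 1) > 0" by (rule spos) (use n3 in auto)
      then have "f (n - 1) = 1" unfolding f_def using Dn1 by simp
      then have "k0 \<noteq> n - 1" using fk0 \<mu>1 by auto
      ultimately have k2: "2 \<le> k0" "k0 + 2 \<le> n" using k0r by auto
      have rm: "k0 - 1 \<in> S" "k0 + 1 \<in> S" using k2 unfolding S_def by auto
      have sm: "sk n (k0 - 1) > 0" "sk n (k0 + 1) > 0" using spos k2 by auto
      have a: "\<mu> * sk n (k0 - 1) \<le> D (k0 - 1)"
        using \<mu>le[OF rm(1)] sm(1) unfolding f_def by (simp add: le_divide_eq)
      have b: "\<mu> * sk n (k0 + 1) \<le> D (k0 + 1)"
        using \<mu>le[OF rm(2)] sm(2) unfolding f_def by (simp add: le_divide_eq)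
      have c: "D k0 = \<mu> * sk n k0" using fk0 spos[OF k0r] unfolding f_def by (simp add: divide_eq_eq)
      have "(\<mu> * sk n (k0 - 1)) * (\<mu> * sk n (k0 + 1)) \<le> D (k0 - 1) * D (k0 + 1)"
      proof (rule mult_mono[OF a b])
        have "0 \<le> \<mu> * sk n (k0 - 1)" using \<mu>pos sm by simp
        then show "0 \<le> D (k0 - 1)" using a by linarith
        show "0 \<le> \<mu> * sk n (k0 + 1)" using \<mu>pos sm by simp
      qed
      then have "sk n 1 ^ 2 + \<mu>^2 * (sk n (k0 - 1) * sk n (k0 + 1)) \<le> (\<mu> * sk n k0) ^ 2"
        using Dineq[OF k2] D1 c by (simp add: power2_eq_square algebra_simps)
      also have "\<dots> = \<mu>^2 * (sk n 1 ^ 2 + sk n (k0 - 1) * sk n (k0 + 1))"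
        using sk_rec[of k0 n] k2 by (simp add: power_mult_distrib)
      finally have "sk n 1 ^ 2 \<le> \<mu>^2 * sk n 1 ^ 2" by (simp add: algebra_simps)
      then have "1 \<le> \<mu>^2" using s1 by simp
      moreover have "\<mu>^2 < 1" using \<mu>pos \<mu>1 by (simp add: power_less_one_iff)
      ultimately show False by simp
    qed
    moreover have "k \<in> S" using that unfolding S_def by auto
    ultimately have "1 \<le> f k" using \<mu>le by fastforce
    then show ?thesis unfolding f_def using spos[OF that] by (simp add: le_divide_eq)
  qed
  define V where "V = (\<lambda>(i, j). minor X i j) ` pairs n"
  have finV: "finite V" unfolding V_def using pairs_finite by simp
  have neV: "V \<noteq> {}" unfolding V_def using pairs_12[of n] n3 by auto
  have Vpos: "v > 0" if "v \<in> V" for v using that pos unfolding V_def tot_pos_def by auto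
  define M where "M = Max V"
  define mm where "mm = Min V"
  have MV: "v \<le> M" "mm \<le> v" if "v \<in> V" for v unfolding M_def mm_def using finV that by simp_all
  have mmpos: "mm > 0" unfolding mm_def using finV neV Vpos by simp
  have orbit_in: "PP X n m (m + k) \<in> V" if "1 \<le> k" "k < n" "m < n" for k m
  proof -
    have "case_prod (minor X) ((sigma n ^^ m) (1, k + 1)) \<in> V"
      unfolding V_def using sigma_pow_pairs[OF that] by force
    then show ?thesis using orbit_PP[OF that] by simp
  qed
  have DleM: "D k \<le> M" and DgeM: "mm \<le> D k" if "1 \<le> k" "k < n" for k
  proof -
    have "QQ X n k \<le> (\<Prod>m<n. M)" unfolding QQ_def
      using orbit_in[OF that] MV Vpos by (intro prod_mono) (auto intro: less_imp_le)
    then have "QQ X n k \<le> M ^ n" by simp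
    then have "D k \<le> root n (M ^ n)" unfolding D_def using n0 by simp
    moreover have "M \<ge> 0" using MV Vpos orbit_in[OF that, of 0] n0 by force
    ultimately show "D k \<le> M" using n0 by (simp add: real_root_power_cancel)
    have "(\<Prod>m<n. mm) \<le> QQ X n k" unfolding QQ_def
      using orbit_in[OF that] MV mmpos by (intro prod_mono) (auto intro: less_imp_le)
    then have "mm ^ n \<le> QQ X n k" by simp
    then have "root n (mm ^ n) \<le> D k" unfolding D_def using n0 by simp
    then show "mm \<le> D k" using n0 mmpos by (simp add: real_root_power_cancel)
  qed
  have Ex: "Eratio n X = M / mm" unfolding Eratio_def V_def M_def mm_def ..
  have "Eratio n X \<le> sk n d / sk n 1"
    using minimizer Yreg_pos[of n] Eratio_Yreg[OF n3] unfolding d_def by metis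
  then have ME: "M / mm \<le> sk n d / sk n 1" using Ex by simp
  have sd: "sk n d > 0" using spos d1 by simp
  have Mge: "sk n d \<le> M" using lower[of d] DleM[of d] d1 by simp
  have mle: "mm \<le> sk n 1" using DgeM[of 1] D1 n3 by simp
  have "M * sk n 1 \<le> sk n d * mm" using ME mmpos s1 by (simp add: field_simps)
  also have "\<dots> \<le> sk n d * sk n 1" using mle sd by (intro mult_left_mono) auto
  finally have "M \<le> sk n d" using s1 by (simp add: mult_le_cancel_right_pos)
  then have Meq: "M = sk n d" using Mge by simp
  have "sk n d * sk n 1 \<le> sk n d * mm"
    using \<open>M * sk n 1 \<le> sk n d * mm\<close> Meq by (simp add: mult.commute)
  then have "sk n 1 \<le> mm" using sd by (simp add: mult_le_cancel_left_pos)
  then have mmeq: "mm = sk n 1" using mle by simp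
  have Dd: "D d = sk n d" using lower[of d] DleM[of d] d1 Meq by simp
  have down: "t < d \<longrightarrow> D (d - t) = sk n (d - t)" for t
  proof (induction t)
    case 0 then show ?case using Dd by simp
  next
    case (Suc t)
    show ?case
    proof
      assume td: "Suc t < d"
      define k where "k = d - t"
      have kr: "2 \<le> k" "k + 2 \<le> n" "k \<le> d" using td d1 unfolding k_def by auto
      have Dk: "D k = sk n k" using Suc.IH td unfolding k_def by simp
      have lo: "sk n (k + 1) \<le> D (k + 1)" using lower[of "k + 1"] kr by simp
      have lo2: "sk n (k - 1) \<le> D (k - 1)" using lower[of "k - 1"] kr by simp
      have sp: "sk n (k + 1) > 0" using spos[of "k + 1"] kr by simp
      have dpos: "D (k - 1) > 0" using Dpos[of "k - 1"] kr by simp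
      have "D (k - 1) * sk n (k + 1) \<le> D (k - 1) * D (k + 1)"
        using lo dpos by (intro mult_left_mono) auto
      also have "\<dots> \<le> D k ^ 2 - D 1 ^ 2" using Dineq[OF kr(1,2)] by simp
      also have "\<dots> = sk n (k - 1) * sk n (k + 1)" using Dk D1 sk_rec[of k n] kr by simp
      finally have "D (k - 1) \<le> sk n (k - 1)" using sp by (simp add: mult_le_cancel_right_pos)
      then have "D (k - 1) = sk n (k - 1)" using lo2 by simp
      moreover have "k - 1 = d - Suc t" unfolding k_def by simp
      ultimately show "D (d - Suc t) = sk n (d - Suc t)" by simp
    qed
  qed
  have all: "D k = sk n k" if "1 \<le> k" "k < n" for k
  proof (cases "k \<le> d")
    case True
    then show ?thesis using down[of "d - k"] that by simp
  next
    case False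
    have r: "1 \<le> n - k" "n - k \<le> d" "n - k < n" using False that d1 by auto
    have "D (n - k) = sk n (n - k)" using down[of "d - (n - k)"] r by simp
    moreover have "D (n - (n - k)) = D (n - k)" using Dsym[of "n - k"] r by simp
    moreover have "sk n (n - k) = sk n k" using sk_sym[of k n] that by simp
    ultimately show ?thesis using that by simp
  qed
  have P1: "\<forall>k \<in> {1..n-1}. Dk n X k = sk n k"
    using all Dk_D by auto
  have P2: "\<forall>i j. 1 \<le> i \<and> i < j \<and> j \<le> n \<longrightarrow>
          sk n 1 \<le> minor X i j \<and> minor X i j \<le> sk n (n div 2)"
  proof (intro allI impI)
    fix i j assume "1 \<le> i \<and> i < j \<and> j \<le> n"
    then have "minor X i j \<in> V" unfolding V_def pairs_def by force
    then show "sk n 1 \<le> minor X i j \<and> minor X i j \<le> sk n (n div 2)"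
      using MV mmeq Meq unfolding d_def by auto
  qed
  have P3: "\<forall>m < n. case_prod (minor X) ((sigma n ^^ m) (1, 2)) = sk n 1"
  proof (intro allI impI)
    fix m assume m: "m < n"
    have "PP X n m (m + 1) = sk n 1"
    proof (rule prod_eq_lower[where f = "\<lambda>m. PP X n m (m + 1)" and n = n])
      show "sk n 1 \<le> PP X n i (i + 1)" if "i < n" for i
        using MV(2)[OF orbit_in[of 1 i]] that n3 mmeq by simp
      show "0 < sk n 1" using s1 .
      show "(\<Prod>i<n. PP X n i (i + 1)) = sk n 1 ^ n" using QD[of 1] D1 n3 unfolding QQ_def by simp
    qed (rule m)
    then show "case_prod (minor X) ((sigma n ^^ m) (1, 2)) = sk n 1"
      using orbit_PP[of 1 n m X] m n3 by (simp add: numeral_2_eq_2)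
  qed
  have P4: "\<forall>m < n. case_prod (minor X) ((sigma n ^^ m) (1, n div 2 + 1)) = sk n (n div 2)"
  proof (intro allI impI)
    fix m assume m: "m < n"
    have "PP X n m (m + d) = sk n d"
    proof (rule prod_eq_upper[where f = "\<lambda>m. PP X n m (m + d)" and n = n])
      show "PP X n i (i + d) \<le> sk n d" if "i < n" for i
        using MV(1)[OF orbit_in[of d i]] that d1 Meq by simp
      show "0 < PP X n i (i + d)" if "i < n" for i
        using Vpos[OF orbit_in[of d i]] that d1 by simp
      show "(\<Prod>i<n. PP X n i (i + d)) = sk n d ^ n" using QD[of d] Dd d1 unfolding QQ_def by simp
    qed (rule m)
    then show "case_prod (minor X) ((sigma n ^^ m) (1, n div 2 + 1)) = sk n (n div 2)"
      using orbit_PP[of d n m X] m d1 unfolding d_def by simp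
  qed
  show ?thesis using P1 P2 P3 P4 by blast
qed

end
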